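(* Let $\mathcal{D}$ be a domain with $\mathcal{SP}\subseteq\mathcal{D}\subseteq\mathcal{U}$ and let $\varphi$ be an own-peak-only rule on $\mathcal{E}_{\mathcal{D}}$ that satisfies the equal division guarantee and not obvious manipulability (NOM). Let $i\in N$ and $(R,\Omega)\in\mathcal{E}_{\mathcal{D}}$. If $p(R_i)$ is a singleton, then $\varphi_i(R,\Omega)$ lies in the closed interval between $p(R_i)$ and $\frac{\Omega}{n}$.
   Context: Let $N=\{1,\dots,n\}$ be a finite set of agents. $\mathcal{U}$ is the set of continuous complete preorders $R_i$ on $\mathbb{R}_+\cup\{\infty\}$ ($P_i$ strict, $I_i$ indifference), with peak $p(R_i)=\{x:xR_iy\ \forall y\}$ (identified with its element when a singleton). $R_i$ is single-peaked if $p(R_i)$ is a singleton and for $x,x'\in\mathbb{R}_+$, $xP_ix'$ whenever $x'<x\le p(R_i)$ or $p(R_i)\le x<x'$; $\mathcal{SP}$ is the set of these. For $\mathcal{D}\subseteq\mathcal{U}$, an economy is $(R,\Omega)$ with $R\in\mathcal{D}^n$, $\Omega>0$; $\mathcal{E}_{\mathcal{D}}$ is the set of economies; a rule is a map $\varphi:\mathcal{E}_{\mathcal{D}}\to\mathbb{R}^n_+$ with $\sum_j\varphi_j(R,\Omega)=\Omega$. Own-peak-only: for $R_i'\in\mathcal{D}$ with $p(R_i')=p(R_i)$, $\varphi_i(R,\Omega)=\varphi_i(R_i',R_{-i},\Omega)$. Equal division guarantee: $\Omega/n\in p(R_i)$ implies $\varphi_i(R,\Omega)I_i\Omega/n$.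 Option set $O^\varphi(R_i,\Omega)=\{\varphi_i(R_i,R_{-i},\Omega):R_{-i}\in\mathcal{D}^{n-1}\}$; $R_i'\in\mathcal{D}$ is a manipulation at $(R_i,\Omega)$ if $\varphi_i(R_i',R_{-i},\Omega)P_i\varphi_i(R_i,R_{-i},\Omega)$ for some $R_{-i}$, an obvious manipulation if moreover each $x'\in O^\varphi(R_i',\Omega)$ satisfies $x'P_ix$ for some $x\in O^\varphi(R_i,\Omega)$; NOM means no obvious manipulation exists. *)

theory Defs
  imports Complex_Main "HOL-Library.Extended_Nonnegative_Real" "HOL-Library.FuncSet"
begin

text \<open>Consumption space R_+ \<union> {\<infinity>} is modelled by ennreal. A preference is a binary relation:
  R x y means x is weakly preferred to y.\<close>
type_synonym pref = "ennreal \<Rightarrow> ennreal \<Rightarrow> bool"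

definition strict :: "pref \<Rightarrow> ennreal \<Rightarrow> ennreal \<Rightarrow> bool" where
  "strict R x y \<longleftrightarrow> R x y \<and> \<not> R y x"

definition indiff :: "pref \<Rightarrow> ennreal \<Rightarrow> ennreal \<Rightarrow> bool" where
  "indiff R x y \<longleftrightarrow> R x y \<and> R y x"

definition peak :: "pref \<Rightarrow> ennreal set" where
  "peak R = {x. \<forall>y. R x y}"

definition complete_preorder :: "pref \<Rightarrow> bool" where
  "complete_preorder R \<longleftrightarrow> (\<forall>x y. R x y \<or> R y x) \<and> (\<forall>x y z. R x y \<longrightarrow> R y z \<longrightarrow> R x z)"

definition continuous_pref :: "pref \<Rightarrow> bool" where
  "continuous_pref R \<longleftrightarrow> (\<forall>x. closed {y. R y x} \<and> closed {y. R x y})"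

definition U_dom :: "pref set" where
  "U_dom = {R. complete_preorder R \<and> continuous_pref R}"

definition SP_dom :: "pref set" where
  "SP_dom = {R \<in> U_dom. \<exists>p. peak R = {p} \<and>
     (\<forall>x x'::real. 0 \<le> x \<longrightarrow> 0 \<le> x' \<longrightarrow>
        ((x' < x \<and> ennreal x \<le> p) \<or> (p \<le> ennreal x \<and> x < x')) \<longrightarrow>
        strict R (ennreal x) (ennreal x'))}"

definition agents :: "nat \<Rightarrow> nat set" where
  "agents n = {1..n}"

definition economies :: "pref set \<Rightarrow> nat \<Rightarrow> ((nat \<Rightarrow> pref) \<times> real) set" where
  "economies D n = {(R, \<Omega>). R \<in> agents n \<rightarrow>\<^sub>E D \<and> \<Omega> > 0}"

type_synonym rule = "(nat \<Rightarrow> pref) \<Rightarrow> real \<Rightarrow> nat \<Rightarrow> real"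

definition is_rule :: "pref set \<Rightarrow> nat \<Rightarrow> rule \<Rightarrow> bool" where
  "is_rule D n \<phi> \<longleftrightarrow> (\<forall>(R, \<Omega>) \<in> economies D n.
     (\<forall>i \<in> agents n. 0 \<le> \<phi> R \<Omega> i) \<and> (\<Sum>j \<in> agents n. \<phi> R \<Omega> j) = \<Omega>)"

definition own_peak_only :: "pref set \<Rightarrow> nat \<Rightarrow> rule \<Rightarrow> bool" where
  "own_peak_only D n \<phi> \<longleftrightarrow> (\<forall>R \<Omega> i Ri'. (R, \<Omega>) \<in> economies D n \<longrightarrow> i \<in> agents n \<longrightarrow>
     Ri' \<in> D \<longrightarrow> peak Ri' = peak (R i) \<longrightarrow> \<phi> R \<Omega> i = \<phi> (R(i := Ri')) \<Omega> i)"

definition equal_division_guarantee :: "pref set \<Rightarrow> nat \<Rightarrow> rule \<Rightarrow> bool" where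
  "equal_division_guarantee D n \<phi> \<longleftrightarrow> (\<forall>R \<Omega> i. (R, \<Omega>) \<in> economies D n \<longrightarrow> i \<in> agents n \<longrightarrow>
     ennreal (\<Omega> / real n) \<in> peak (R i) \<longrightarrow>
     indiff (R i) (ennreal (\<phi> R \<Omega> i)) (ennreal (\<Omega> / real n)))"

definition option_set :: "pref set \<Rightarrow> nat \<Rightarrow> rule \<Rightarrow> nat \<Rightarrow> pref \<Rightarrow> real \<Rightarrow> real set" where
  "option_set D n \<phi> i Ri \<Omega> = {\<phi> R \<Omega> i | R. R \<in> agents n \<rightarrow>\<^sub>E D \<and> R i = Ri}"

definition manipulation :: "pref set \<Rightarrow> nat \<Rightarrow> rule \<Rightarrow> nat \<Rightarrow> pref \<Rightarrow> real \<Rightarrow> pref \<Rightarrow> bool" where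
  "manipulation D n \<phi> i Ri \<Omega> Ri' \<longleftrightarrow> Ri' \<in> D \<and>
     (\<exists>R. R \<in> agents n \<rightarrow>\<^sub>E D \<and> R i = Ri \<and>
        strict Ri (ennreal (\<phi> (R(i := Ri')) \<Omega> i)) (ennreal (\<phi> R \<Omega> i)))"

definition obvious_manipulation :: "pref set \<Rightarrow> nat \<Rightarrow> rule \<Rightarrow> nat \<Rightarrow> pref \<Rightarrow> real \<Rightarrow> pref \<Rightarrow> bool" where
  "obvious_manipulation D n \<phi> i Ri \<Omega> Ri' \<longleftrightarrow> manipulation D n \<phi> i Ri \<Omega> Ri' \<and>
     (\<forall>x' \<in> option_set D n \<phi> i Ri' \<Omega>. \<exists>x \<in> option_set D n \<phi> i Ri \<Omega>.
        strict Ri (ennreal x') (ennreal x))"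

definition NOM :: "pref set \<Rightarrow> nat \<Rightarrow> rule \<Rightarrow> bool" where
  "NOM D n \<phi> \<longleftrightarrow> (\<forall>i \<in> agents n. \<forall>Ri \<in> D. \<forall>\<Omega>>0. \<forall>Ri'.
     \<not> obvious_manipulation D n \<phi> i Ri \<Omega> Ri')"

end

theory Submission
  imports Defs "HOL-Analysis.Analysis"
begin

definition Dw :: "real \<Rightarrow> real \<Rightarrow> real \<Rightarrow> ennreal \<Rightarrow> ereal" where
  "Dw a b r x = max (ereal a * (ereal r - enn2ereal x)) (ereal b * (enn2ereal x - ereal r))"

definition spw :: "real \<Rightarrow> real \<Rightarrow> real \<Rightarrow> pref" where
  "spw a b r x y \<longleftrightarrow> Dw a b r x \<le> Dw a b r y"

definition spinf :: pref where
  "spinf x y \<longleftrightarrow> y \<le> x"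

definition Mw :: "real \<Rightarrow> real \<Rightarrow> real \<Rightarrow> real \<Rightarrow> real" where
  "Mw a b r t = max (a * (r - t)) (b * (t - r))"

lemma Dw_cont: "continuous_on UNIV (Dw a b r)"
  unfolding Dw_def continuous_on_def
proof (intro ballI)
  fix x :: ennreal
  have e: "(enn2ereal \<longlongrightarrow> enn2ereal x) (at x within UNIV)"
    using continuous_on_enn2ereal by (simp add: continuous_on_def)
  have "((\<lambda>y. ereal r - enn2ereal y) \<longlongrightarrow> ereal r - enn2ereal x) (at x within UNIV)"
    by (intro tendsto_diff_ereal_general e tendsto_const) auto
  then have 1: "((\<lambda>y. ereal a * (ereal r - enn2ereal y)) \<longlongrightarrow> ereal a * (ereal r - enn2ereal x)) (at x within UNIV)"
    by (intro tendsto_cmult_ereal) auto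
  have "((\<lambda>y. enn2ereal y - ereal r) \<longlongrightarrow> enn2ereal x - ereal r) (at x within UNIV)"
    by (intro tendsto_diff_ereal_general e tendsto_const) auto
  then have 2: "((\<lambda>y. ereal b * (enn2ereal y - ereal r)) \<longlongrightarrow> ereal b * (enn2ereal x - ereal r)) (at x within UNIV)"
    by (intro tendsto_cmult_ereal) auto
  show "((\<lambda>y. max (ereal a * (ereal r - enn2ereal y)) (ereal b * (enn2ereal y - ereal r))) \<longlongrightarrow>
      max (ereal a * (ereal r - enn2ereal x)) (ereal b * (enn2ereal x - ereal r))) (at x within UNIV)"
    by (intro tendsto_max 1 2)
qed

lemma Dw_ennreal: "0 \<le> t \<Longrightarrow> Dw a b r (ennreal t) = ereal (Mw a b r t)"
  by (simp add: Dw_def Mw_def)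

lemma Dw_top: "0 < b \<Longrightarrow> Dw a b r top = \<infinity>"
  by (simp add: Dw_def)

lemma maxw_nonneg: assumes a: "0 < a" and b: "0 < b" shows "0 \<le> Mw a b r t"
  unfolding Mw_def
proof (cases "t \<le> r")
  case True then show "0 \<le> max (a * (r - t)) (b * (t - r))" using a by (intro max.coboundedI1) simp
next
  case False then show "0 \<le> max (a * (r - t)) (b * (t - r))" using b by (intro max.coboundedI2) simp
qed

lemma Dw_nonneg: "0 < a \<Longrightarrow> 0 < b \<Longrightarrow> 0 \<le> Dw a b r x"
  by (cases x rule: ennreal_cases) (auto simp: Dw_ennreal Dw_top maxw_nonneg)

lemma Dw_zero: assumes "0 < a" "0 < b" "0 \<le> r" "Dw a b r x \<le> 0" shows "x = ennreal r"
proof (cases x rule: ennreal_cases)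
  case (real t)
  then have le: "max (a * (r - t)) (b * (t - r)) \<le> 0" using assms Dw_ennreal by (simp add: Mw_def)
  have "t = r"
  proof (rule ccontr)
    assume "t \<noteq> r"
    then consider "t < r" | "r < t" by linarith
    then show False
    proof cases
      case 1 then have "0 < a * (r - t)" using assms by simp
      then show False using le by linarith
    next
      case 2 then have "0 < b * (t - r)" using assms by simp
      then show False using le by linarith
    qed
  qed
  then show ?thesis using real by simp
next
  case top
  then show ?thesis using assms Dw_top by simp
qed

lemma Dw_peak: "0 \<le> r \<Longrightarrow> Dw a b r (ennreal r) = 0"
  by (simp add: Dw_ennreal zero_ereal_def Mw_def)

lemma maxw_mono:
  assumes a: "0 < a" and b: "0 < b" and h: "(x' < x \<and> x \<le> r) \<or> (r \<le> x \<and> x < x')"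
  shows "Mw a b r x < Mw a b r x'"
  using h
proof
  assume h1: "x' < x \<and> x \<le> r"
  have "b * (x - r) \<le> 0" using b h1 by (intro mult_nonneg_nonpos) auto
  moreover have "0 \<le> a * (r - x)" using a h1 by simp
  moreover have "a * (r - x) < a * (r - x')" using a h1 by simp
  ultimately show ?thesis unfolding Mw_def by linarith
next
  assume h1: "r \<le> x \<and> x < x'"
  have "a * (r - x) \<le> 0" using a h1 by (intro mult_nonneg_nonpos) auto
  moreover have "0 \<le> b * (x - r)" using b h1 by simp
  moreover have "b * (x - r) < b * (x' - r)" using b h1 by simp
  ultimately show ?thesis unfolding Mw_def by linarith
qed

lemma spw_SP: assumes a: "0 < a" and b: "0 < b" and r: "0 \<le> r"
  shows "spw a b r \<in> SP_dom" and "peak (spw a b r) = {ennreal r}"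
proof -
  show pk: "peak (spw a b r) = {ennreal r}"
  proof
    show "peak (spw a b r) \<subseteq> {ennreal r}"
    proof
      fix x assume "x \<in> peak (spw a b r)"
      then have "Dw a b r x \<le> Dw a b r (ennreal r)" unfolding peak_def spw_def by auto
      then have "x = ennreal r" using Dw_zero[OF a b r] Dw_peak[OF r] by simp
      then show "x \<in> {ennreal r}" by simp
    qed
    show "{ennreal r} \<subseteq> peak (spw a b r)"
      unfolding peak_def spw_def using Dw_peak[OF r] Dw_nonneg[OF a b] by auto
  qed
  have U: "spw a b r \<in> U_dom"
    unfolding U_dom_def complete_preorder_def continuous_pref_def spw_def
    by (auto intro!: closed_Collect_le Dw_cont continuous_on_const)
  have sp: "strict (spw a b r) (ennreal x) (ennreal x')"
    if "0 \<le> x" "0 \<le> x'" "(x' < x \<and> ennreal x \<le> ennreal r) \<or> (ennreal r \<le> ennreal x \<and> x < x')" for x x'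
  proof -
    have "(x' < x \<and> x \<le> r) \<or> (r \<le> x \<and> x < x')" using that r by auto
    then have "Mw a b r x < Mw a b r x'"
      using maxw_mono[OF a b] by blast
    then show ?thesis using that by (simp add: strict_def spw_def Dw_ennreal)
  qed
  show "spw a b r \<in> SP_dom" unfolding SP_dom_def using U pk sp by blast
qed

lemma exists_sp:
  assumes q: "0 \<le> q" and r: "0 \<le> r" and x: "0 \<le> x0"
    and h: "(x0 < q \<and> x0 < r) \<or> (q < x0 \<and> r < x0)"
  shows "\<exists>Rs\<in>SP_dom. peak Rs = {ennreal q} \<and> strict Rs (ennreal r) (ennreal x0)"
  using h
proof
  assume h1: "x0 < q \<and> x0 < r"
  define a where "a = (\<bar>r - q\<bar> + 1) / (q - x0)"
  have a0: "0 < a" using h1 by (simp add: a_def)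
  have ax: "a * (q - x0) = \<bar>r - q\<bar> + 1" using h1 by (simp add: a_def)
  have Dx: "Mw a 1 q x0 = \<bar>r - q\<bar> + 1" using ax h1 by (auto simp: Mw_def max_def)
  have "Mw a 1 q r < \<bar>r - q\<bar> + 1"
  proof (cases "r \<le> q")
    case True
    have "a * (q - r) < a * (q - x0)" using a0 h1 by simp
    then show ?thesis using ax True by (simp add: Mw_def)
  next
    case False
    have "a * (q - r) \<le> 0" using a0 False by (intro mult_nonneg_nonpos) auto
    then show ?thesis using False by (simp add: Mw_def)
  qed
  then have "strict (spw a 1 q) (ennreal r) (ennreal x0)"
    using Dx r x by (simp add: strict_def spw_def Dw_ennreal)
  then show ?thesis using spw_SP[OF a0 zero_less_one q] by blast
next
  assume h1: "q < x0 \<and> r < x0"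
  define b where "b = (\<bar>r - q\<bar> + 1) / (x0 - q)"
  have b0: "0 < b" using h1 by (simp add: b_def)
  have bx: "b * (x0 - q) = \<bar>r - q\<bar> + 1" using h1 by (simp add: b_def)
  have Dx: "Mw 1 b q x0 = \<bar>r - q\<bar> + 1" using bx h1 by (auto simp: Mw_def max_def)
  have "Mw 1 b q r < \<bar>r - q\<bar> + 1"
  proof (cases "q \<le> r")
    case True
    have "b * (r - q) < b * (x0 - q)" using b0 h1 by simp
    then show ?thesis using bx True by (simp add: Mw_def)
  next
    case False
    have "b * (r - q) \<le> 0" using b0 False by (intro mult_nonneg_nonpos) auto
    then show ?thesis using False by (simp add: Mw_def)
  qed
  then have "strict (spw 1 b q) (ennreal r) (ennreal x0)"
    using Dx r x by (simp add: strict_def spw_def Dw_ennreal)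
  then show ?thesis using spw_SP[OF zero_less_one b0 q] by blast
qed

lemma spinf_SP: shows "spinf \<in> SP_dom" and "peak spinf = {top}"
proof -
  show pk: "peak spinf = {top}"
    unfolding peak_def spinf_def by (auto intro: top_le)
  have U: "spinf \<in> U_dom"
    unfolding U_dom_def complete_preorder_def continuous_pref_def spinf_def
    by (auto intro!: closed_Collect_le continuous_on_const continuous_on_id)
  have sp: "strict spinf (ennreal x) (ennreal x')"
    if "0 \<le> x" "0 \<le> x'" "(x' < x \<and> ennreal x \<le> top) \<or> (top \<le> ennreal x \<and> x < x')" for x x'
    using that by (auto simp: strict_def spinf_def ennreal_le_iff ennreal_less_iff top_unique)
  show "spinf \<in> SP_dom" unfolding SP_dom_def using U pk sp by blast
qed

lemma upd_PiE: "R \<in> A \<rightarrow>\<^sub>E D \<Longrightarrow> i \<in> A \<Longrightarrow> x \<in> D \<Longrightarrow> R(i := x) \<in> A \<rightarrow>\<^sub>E D"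
  by (auto simp: PiE_def extensional_def)

theorem lemma3:
  fixes D :: "pref set" and n :: nat and \<phi> :: rule
    and R :: "nat \<Rightarrow> pref" and \<Omega> :: real and i :: nat and p :: ennreal
  assumes "SP_dom \<subseteq> D" and "D \<subseteq> U_dom"
    and "is_rule D n \<phi>"
    and "own_peak_only D n \<phi>"
    and "equal_division_guarantee D n \<phi>"
    and "NOM D n \<phi>"
    and "i \<in> agents n"
    and "(R, \<Omega>) \<in> economies D n"
    and "peak (R i) = {p}"
  shows "min p (ennreal (\<Omega> / real n)) \<le> ennreal (\<phi> R \<Omega> i) \<and>
         ennreal (\<phi> R \<Omega> i) \<le> max p (ennreal (\<Omega> / real n))"
proof (rule ccontr)
  assume neg: "\<not> ?thesis"
  define r where "r = \<Omega> / real n"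
  define x0 where "x0 = \<phi> R \<Omega> i"
  have RD: "R \<in> agents n \<rightarrow>\<^sub>E D" and Om: "\<Omega> > 0" using assms(8) by (auto simp: economies_def)
  have n1: "n \<ge> 1" using assms(7) by (auto simp: agents_def)
  have r0: "0 \<le> r" using Om n1 by (simp add: r_def)
  have x00: "0 \<le> x0" using assms(3) assms(7) assms(8) unfolding is_rule_def x0_def by fastforce
  have disj: "ennreal x0 < min p (ennreal r) \<or> max p (ennreal r) < ennreal x0"
    using neg unfolding r_def x0_def de_Morgan_conj not_le .
  obtain Rs where Rs: "Rs \<in> SP_dom" "peak Rs = {p}" and str: "strict Rs (ennreal r) (ennreal x0)"
  proof (cases "p = top")
    case True
    then have "x0 < r" using disj r0 x00 by (auto simp: ennreal_less_iff)
    moreover have "spinf \<in> SP_dom" "peak spinf = {top}" using spinf_SP by auto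
    ultimately have "strict spinf (ennreal r) (ennreal x0)"
      using r0 x00 unfolding SP_dom_def by auto
    then show ?thesis using spinf_SP that True by metis
  next
    case False
    then obtain q where pq: "p = ennreal q" and q0: "0 \<le> q" by (cases p rule: ennreal_cases) auto
    have "(x0 < q \<and> x0 < r) \<or> (q < x0 \<and> r < x0)"
      using disj r0 x00 q0 unfolding pq by (auto simp: ennreal_less_iff)
    then obtain Rs where "Rs \<in> SP_dom" "peak Rs = {ennreal q}" "strict Rs (ennreal r) (ennreal x0)"
      using exists_sp[OF q0 r0 x00] by blast
    then show ?thesis using that pq by blast
  qed
  have RsD: "Rs \<in> D" using Rs assms(1) by blast
  define R1 where "R1 = R(i := Rs)"
  have R1D: "R1 \<in> agents n \<rightarrow>\<^sub>E D" unfolding R1_def by (rule upd_PiE[OF RD assms(7) RsD])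
  have R1i: "R1 i = Rs" by (simp add: R1_def)
  have x01: "\<phi> R1 \<Omega> i = x0"
  proof -
    have pe: "peak Rs = peak (R i)" using Rs(2) assms(9) by simp
    have "\<forall>R \<Omega> i Ri'. (R, \<Omega>) \<in> economies D n \<longrightarrow> i \<in> agents n \<longrightarrow>
     Ri' \<in> D \<longrightarrow> peak Ri' = peak (R i) \<longrightarrow> \<phi> R \<Omega> i = \<phi> (R(i := Ri')) \<Omega> i"
      using assms(4) unfolding own_peak_only_def .
    then have "\<phi> R \<Omega> i = \<phi> (R(i := Rs)) \<Omega> i"
      using assms(7) assms(8) RsD pe by blast
    then show ?thesis unfolding R1_def x0_def by simp
  qed
  define R' where "R' = spw 1 1 r"
  have R'D: "R' \<in> D" using spw_SP[of 1 1, OF _ _ r0] assms(1) unfolding R'_def by auto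
  have opt: "\<phi> Q \<Omega> i = r" if "Q \<in> agents n \<rightarrow>\<^sub>E D" "Q i = R'" for Q
  proof -
    have ec: "(Q, \<Omega>) \<in> economies D n" using that Om by (simp add: economies_def)
    have "indiff R' (ennreal (\<phi> Q \<Omega> i)) (ennreal r)"
    proof -
      have pk: "ennreal r \<in> peak (Q i)" using that(2) spw_SP(2)[of 1 1, OF _ _ r0] unfolding R'_def by simp
      have "\<forall>R \<Omega> i. (R, \<Omega>) \<in> economies D n \<longrightarrow> i \<in> agents n \<longrightarrow>
          ennreal (\<Omega> / real n) \<in> peak (R i) \<longrightarrow>
          indiff (R i) (ennreal (\<phi> R \<Omega> i)) (ennreal (\<Omega> / real n))"
        using assms(5) unfolding equal_division_guarantee_def .
      then have "indiff (Q i) (ennreal (\<phi> Q \<Omega> i)) (ennreal r)"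
        using ec assms(7) pk unfolding r_def by blast
      then show ?thesis using that(2) by simp
    qed
    then have "Dw 1 1 r (ennreal (\<phi> Q \<Omega> i)) \<le> 0"
      unfolding indiff_def R'_def spw_def using Dw_peak[OF r0] by simp
    moreover have "0 \<le> \<phi> Q \<Omega> i" using assms(3) ec assms(7) unfolding is_rule_def by fastforce
    ultimately have "ennreal (\<phi> Q \<Omega> i) = ennreal r" using Dw_zero[of 1 1, OF _ _ r0] by simp
    then show ?thesis using r0 \<open>0 \<le> \<phi> Q \<Omega> i\<close> by simp
  qed
  have R1'D: "R1(i := R') \<in> agents n \<rightarrow>\<^sub>E D" by (rule upd_PiE[OF R1D assms(7) R'D])
  have man: "manipulation D n \<phi> i Rs \<Omega> R'"
    unfolding manipulation_def
    using R'D R1D R1i opt[OF R1'D] x01 str by auto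
  have obv: "obvious_manipulation D n \<phi> i Rs \<Omega> R'"
    unfolding obvious_manipulation_def
  proof (intro conjI man ballI)
    fix x' assume "x' \<in> option_set D n \<phi> i R' \<Omega>"
    then have "x' = r" using opt unfolding option_set_def by auto
    moreover have "x0 \<in> option_set D n \<phi> i Rs \<Omega>"
      unfolding option_set_def using R1D R1i x01 by force
    ultimately show "\<exists>x\<in>option_set D n \<phi> i Rs \<Omega>. strict Rs (ennreal x') (ennreal x)"
      using str by blast
  qed
  then show False using assms(6) assms(7) RsD Om unfolding NOM_def by blast
qed

end
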